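(* For any integer $m\ge1$ and all $z,\xi\in\mathbb{B}_N$, $$(1-|\xi|^2)^{-m-1}p_m(\widetilde\Delta_\xi)\Big\{\frac{1-|\xi|^2}{|1-\langle z,\xi\rangle|^2}\Big\}=\big(|E_z|^2-\Delta_z\big)\Big\{\frac{(1-|z|^2)^{m+1}}{|1-\langle z,\xi\rangle|^{2(m+1)}}\Big\},$$ where $p_m(t)=\frac{1}{(m!)^2}\prod_{j=0}^m\big(j(j-N)-t\big)$. As a consequence, as differential operators on smooth functions on $\mathbb{B}_N$, $$(m!)^2(1-|\xi|^2)^{-m-1}p_m(\widetilde\Delta_\xi)=\big(|E_\xi+m|^2-\Delta_\xi\big)\cdots\big(|E_\xi+1|^2-\Delta_\xi\big)\big(|E_\xi|^2-\Delta_\xi\big).$$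
   Context: $\mathbb{B}_N$ is the unit ball of $\mathbb{C}^N$ and $\langle z,\xi\rangle=\sum_j z_j\bar\xi_j$. $E_z=\sum_j z_j\partial/\partial z_j$, $\bar E_z=\sum_j\bar z_j\partial/\partial\bar z_j$, $\Delta_z=\sum_j\partial^2/\partial z_j\partial\bar z_j$, $|E_z+s|^2=(E_z+s)(\bar E_z+s)$ for real $s$; subscript $\xi$ means acting in the variable $\xi$. The invariant Laplacian is $\widetilde\Delta=(1-|z|^2)(\Delta_z-|E_z|^2)$ on $C^2(\mathbb{B}_N)$, and $p_m(\widetilde\Delta)$ is the polynomial $p_m$ evaluated at this operator (composition powers); $(1-|\xi|^2)^{-m-1}$ acts by multiplication after applying $p_m(\widetilde\Delta_\xi)$. *)

theory Defs
  imports "HOL-Analysis.Analysis"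
begin

text \<open>Points of C^N are vectors of type complex^'n, N = CARD('n).\<close>

type_synonym 'n cfun = "complex^'n \<Rightarrow> complex"

definition cinner :: "complex^'n::finite \<Rightarrow> complex^'n \<Rightarrow> complex" where
  "cinner z w = (\<Sum>j\<in>UNIV. z$j * cnj (w$j))"

definition dx :: "'n::finite \<Rightarrow> 'n cfun \<Rightarrow> 'n cfun" where
  "dx j f z = frechet_derivative f (at z) (axis j 1)"

definition dy :: "'n::finite \<Rightarrow> 'n cfun \<Rightarrow> 'n cfun" where
  "dy j f z = frechet_derivative f (at z) (axis j \<i>)"

definition dz :: "'n::finite \<Rightarrow> 'n cfun \<Rightarrow> 'n cfun" where
  "dz j f z = (dx j f z - \<i> * dy j f z) / 2"

definition dzb :: "'n::finite \<Rightarrow> 'n cfun \<Rightarrow> 'n cfun" where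
  "dzb j f z = (dx j f z + \<i> * dy j f z) / 2"

definition lap :: "'n::finite cfun \<Rightarrow> 'n cfun" where
  "lap f z = (\<Sum>j\<in>UNIV. dz j (dzb j f) z)"

definition Eop :: "real \<Rightarrow> 'n::finite cfun \<Rightarrow> 'n cfun" where
  "Eop s f z = (\<Sum>j\<in>UNIV. z$j * dz j f z) + of_real s * f z"

definition Ebop :: "real \<Rightarrow> 'n::finite cfun \<Rightarrow> 'n cfun" where
  "Ebop s f z = (\<Sum>j\<in>UNIV. cnj (z$j) * dzb j f z) + of_real s * f z"

text \<open>|E + s|^2 = (E + s)(Ebar + s)\<close>
definition absE2 :: "real \<Rightarrow> 'n::finite cfun \<Rightarrow> 'n cfun" where
  "absE2 s f = Eop s (Ebop s f)"

definition invlap :: "'n::finite cfun \<Rightarrow> 'n cfun" where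
  "invlap f z = of_real (1 - (norm z)^2) * (lap f z - absE2 0 f z)"

text \<open>prod_{j=0}^k (j(j-N) - invlap), as an operator\<close>
fun pprod :: "nat \<Rightarrow> 'n::finite cfun \<Rightarrow> 'n cfun" where
  "pprod 0 f = (\<lambda>z. - invlap f z)"
| "pprod (Suc j) f = (let g = pprod j f in
     (\<lambda>z. of_real (real (Suc j) * (real (Suc j) - real CARD('n))) * g z - invlap g z))"

definition pm_op :: "nat \<Rightarrow> 'n::finite cfun \<Rightarrow> 'n cfun" where
  "pm_op m f z = pprod m f z / (of_nat (fact m))^2"

definition Qop :: "nat \<Rightarrow> 'n::finite cfun \<Rightarrow> 'n cfun" where
  "Qop k f z = absE2 (real k) f z - lap f z"

fun Qprod :: "nat \<Rightarrow> 'n::finite cfun \<Rightarrow> 'n cfun" where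
  "Qprod 0 f = Qop 0 f"
| "Qprod (Suc k) f = Qop (Suc k) (Qprod k f)"

fun Ck_on :: "nat \<Rightarrow> (complex^'n::finite) set \<Rightarrow> 'n cfun \<Rightarrow> bool" where
  "Ck_on 0 S f = continuous_on S f"
| "Ck_on (Suc k) S f = (f differentiable_on S \<and> continuous_on S f \<and>
     (\<forall>v. Ck_on k S (\<lambda>z. frechet_derivative f (at z) v)))"

definition smooth_on :: "(complex^'n::finite) set \<Rightarrow> 'n cfun \<Rightarrow> bool" where
  "smooth_on S f = (\<forall>k. Ck_on k S f)"

end

theory Submission
  imports Defs
begin


definition Dv :: "complex^'n::finite \<Rightarrow> 'n cfun \<Rightarrow> complex^'n \<Rightarrow> complex" where
  "Dv v f u = frechet_derivative f (at u) v"

lemma Dv_has: "(f has_derivative f') (at u) \<Longrightarrow> Dv v f u = f' v"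
  unfolding Dv_def by (metis frechet_derivative_at)

lemma fd_works: "f differentiable (at u) \<Longrightarrow> (f has_derivative frechet_derivative f (at u)) (at u)"
  using frechet_derivative_works by blast

lemma fd_cong:
  assumes "open S" "u \<in> S" "\<And>x. x \<in> S \<Longrightarrow> f x = g x"
  shows "frechet_derivative f (at u) = frechet_derivative g (at u)"
proof -
  have "(\<lambda>D. (f has_derivative D) (at u)) = (\<lambda>D. (g has_derivative D) (at u))"
  proof (intro ext iffI)
    fix D assume "(f has_derivative D) (at u)"
    then show "(g has_derivative D) (at u)"
      by (rule has_derivative_transform_within_open[OF _ assms(1,2)]) (simp add: assms(3))
  next
    fix D assume "(g has_derivative D) (at u)"
    then show "(f has_derivative D) (at u)"
      by (rule has_derivative_transform_within_open[OF _ assms(1,2)]) (simp add: assms(3))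
  qed
  then show ?thesis unfolding frechet_derivative_def by simp
qed

lemma Dv_cong:
  "open S \<Longrightarrow> u \<in> S \<Longrightarrow> (\<And>x. x \<in> S \<Longrightarrow> f x = g x) \<Longrightarrow> Dv v f u = Dv v g u"
  unfolding Dv_def using fd_cong by metis

lemma diff_cong:
  assumes "open S" "u \<in> S" "\<And>x. x \<in> S \<Longrightarrow> f x = g x" "f differentiable (at u)"
  shows "g differentiable (at u)"
  using assms unfolding differentiable_def
  by (meson has_derivative_transform_within_open)

lemma Dv_add: "f differentiable (at u) \<Longrightarrow> g differentiable (at u) \<Longrightarrow>
   Dv v (\<lambda>x. f x + g x) u = Dv v f u + Dv v g u"
  using Dv_has[OF has_derivative_add[OF fd_works fd_works], of f u g v] by (simp add: Dv_def)

lemma Dv_diff: "f differentiable (at u) \<Longrightarrow> g differentiable (at u) \<Longrightarrow>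
   Dv v (\<lambda>x. f x - g x) u = Dv v f u - Dv v g u"
  using Dv_has[OF has_derivative_diff[OF fd_works fd_works], of f u g v] by (simp add: Dv_def)

lemma Dv_mult: "f differentiable (at u) \<Longrightarrow> g differentiable (at u) \<Longrightarrow>
   Dv v (\<lambda>x. f x * g x) u = f u * Dv v g u + Dv v f u * g u"
  using Dv_has[OF has_derivative_mult[OF fd_works fd_works], of f u g v] by (simp add: Dv_def)

lemma Dv_const: "Dv v (\<lambda>x. c) u = 0"
  using Dv_has[OF has_derivative_const, where v=v] by simp

lemma Dv_cmult: "f differentiable (at u) \<Longrightarrow> Dv v (\<lambda>x. c * f x) u = c * Dv v f u"
  using Dv_mult[of "\<lambda>x. c" u f v] by (simp add: Dv_const)

lemma Dv_inverse: "f differentiable (at u) \<Longrightarrow> f u \<noteq> 0 \<Longrightarrow>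
   Dv v (\<lambda>x. inverse (f x)) u = - (inverse (f u) * inverse (f u)) * Dv v f u"
proof -
  assume a: "f differentiable (at u)" "f u \<noteq> 0"
  have "((\<lambda>x. inverse (f x)) has_derivative
     (\<lambda>h. - (inverse (f u) * frechet_derivative f (at u) h * inverse (f u)))) (at u)"
    using a(2) fd_works[OF a(1)] by (rule Deriv.has_derivative_inverse)
  from Dv_has[OF this, of v] show ?thesis by (simp add: Dv_def)
qed

lemma Dv_power: "f differentiable (at u) \<Longrightarrow>
   Dv v (\<lambda>x. (f x)^n) u = of_nat n * f u ^ (n - 1) * Dv v f u"
proof -
  assume a: "f differentiable (at u)"
  have "((\<lambda>x. f x ^ n) has_derivative
     (\<lambda>h. of_nat n * frechet_derivative f (at u) h * f u ^ (n - 1))) (at u)"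
    by (rule has_derivative_power[OF fd_works[OF a]])
  from Dv_has[OF this, of v] show ?thesis by (simp add: Dv_def)
qed

lemma Dv_sum: "finite I \<Longrightarrow> (\<And>i. i \<in> I \<Longrightarrow> f i differentiable (at u)) \<Longrightarrow>
   Dv v (\<lambda>x. \<Sum>i\<in>I. f i x) u = (\<Sum>i\<in>I. Dv v (f i) u)"
  using Dv_has[OF has_derivative_sum[of I f "\<lambda>i. frechet_derivative (f i) (at u)" "at u"], of v]
  by (simp add: Dv_def fd_works)

lemma has_der_coord: "((\<lambda>x::complex^'n::finite. x$k) has_derivative (\<lambda>h. h$k)) F"
  by (simp add: bounded_linear_imp_has_derivative bounded_linear_vec_nth)

lemma has_der_cnjcoord: "((\<lambda>x::complex^'n::finite. cnj (x$k)) has_derivative (\<lambda>h. cnj (h$k))) F"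
  using has_derivative_cnj[OF has_der_coord] .

lemma diff_coord[simp]: "(\<lambda>x::complex^'n::finite. x$k) differentiable F"
  using has_der_coord unfolding differentiable_def by blast
lemma diff_cnjcoord[simp]: "(\<lambda>x::complex^'n::finite. cnj (x$k)) differentiable F"
  using has_der_cnjcoord unfolding differentiable_def by blast

lemma Dv_coord: "Dv v (\<lambda>x. x$k) u = v$k"
  by (rule Dv_has[OF has_der_coord])
lemma Dv_cnjcoord: "Dv v (\<lambda>x. cnj (x$k)) u = cnj (v$k)"
  by (rule Dv_has[OF has_der_cnjcoord])

definition lin :: "'n::finite \<Rightarrow> complex \<Rightarrow> complex \<Rightarrow> 'n cfun \<Rightarrow> 'n cfun" where
  "lin j c d f u = c * Dv (axis j 1) f u + d * Dv (axis j \<i>) f u"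

lemma dz_lin: "dz j f u = lin j (1/2) (-\<i>/2) f u"
  unfolding dz_def dx_def dy_def lin_def Dv_def by (simp add: field_simps)
lemma dzb_lin: "dzb j f u = lin j (1/2) (\<i>/2) f u"
  unfolding dzb_def dx_def dy_def lin_def Dv_def by (simp add: field_simps)

lemma lin_cong: "open S \<Longrightarrow> u \<in> S \<Longrightarrow> (\<And>x. x \<in> S \<Longrightarrow> f x = g x) \<Longrightarrow> lin j c d f u = lin j c d g u"
  unfolding lin_def using Dv_cong[of S u f g] by simp

lemma lin_add: "f differentiable (at u) \<Longrightarrow> g differentiable (at u) \<Longrightarrow>
   lin j c d (\<lambda>x. f x + g x) u = lin j c d f u + lin j c d g u"
  unfolding lin_def by (simp add: Dv_add algebra_simps)
lemma lin_diff: "f differentiable (at u) \<Longrightarrow> g differentiable (at u) \<Longrightarrow>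
   lin j c d (\<lambda>x. f x - g x) u = lin j c d f u - lin j c d g u"
  unfolding lin_def by (simp add: Dv_diff algebra_simps)
lemma lin_mult: "f differentiable (at u) \<Longrightarrow> g differentiable (at u) \<Longrightarrow>
   lin j c d (\<lambda>x. f x * g x) u = f u * lin j c d g u + lin j c d f u * g u"
  unfolding lin_def by (simp add: Dv_mult algebra_simps)
lemma lin_const: "lin j c d (\<lambda>x. a) u = 0"
  unfolding lin_def by (simp add: Dv_const)
lemma lin_cmult: "f differentiable (at u) \<Longrightarrow> lin j c d (\<lambda>x. a * f x) u = a * lin j c d f u"
  unfolding lin_def by (simp add: Dv_cmult algebra_simps)
lemma lin_inverse: "f differentiable (at u) \<Longrightarrow> f u \<noteq> 0 \<Longrightarrow>
   lin j c d (\<lambda>x. inverse (f x)) u = - (inverse (f u) * inverse (f u)) * lin j c d f u"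
  unfolding lin_def by (simp add: Dv_inverse algebra_simps)
lemma lin_power: "f differentiable (at u) \<Longrightarrow>
   lin j c d (\<lambda>x. (f x)^n) u = of_nat n * f u ^ (n - 1) * lin j c d f u"
  unfolding lin_def by (simp add: Dv_power algebra_simps)
lemma lin_sum: "finite I \<Longrightarrow> (\<And>i. i \<in> I \<Longrightarrow> f i differentiable (at u)) \<Longrightarrow>
   lin j c d (\<lambda>x. \<Sum>i\<in>I. f i x) u = (\<Sum>i\<in>I. lin j c d (f i) u)"
  unfolding lin_def by (simp add: Dv_sum sum_distrib_left sum.distrib)

lemma dz_coord: "dz j (\<lambda>x. x$k) u = (if k = j then 1 else 0)"
  unfolding dz_lin lin_def Dv_coord by (simp add: axis_def)
lemma dzb_coord: "dzb j (\<lambda>x. x$k) u = 0"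
  unfolding dzb_lin lin_def Dv_coord by (simp add: axis_def)
lemma dz_cnjcoord: "dz j (\<lambda>x. cnj (x$k)) u = 0"
  unfolding dz_lin lin_def Dv_cnjcoord by (simp add: axis_def)
lemma dzb_cnjcoord: "dzb j (\<lambda>x. cnj (x$k)) u = (if k = j then 1 else 0)"
  unfolding dzb_lin lin_def Dv_cnjcoord by (simp add: axis_def)



lemma lin_coord: "lin j c d (\<lambda>x. x$k) u = (if k = j then c + d * \<i> else 0)"
  unfolding lin_def Dv_coord by (simp add: axis_def)
lemma lin_cnjcoord: "lin j c d (\<lambda>x. cnj (x$k)) u = (if k = j then c - d * \<i> else 0)"
  unfolding lin_def Dv_cnjcoord by (simp add: axis_def)

definition Rf :: "complex^'n::finite \<Rightarrow> complex" where
  "Rf u = 1 - (\<Sum>k\<in>UNIV. u$k * cnj (u$k))"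
definition Wf :: "complex^'n::finite \<Rightarrow> complex^'n \<Rightarrow> complex" where
  "Wf a u = 1 - (\<Sum>k\<in>UNIV. u$k * cnj (a$k))"
definition Wbf :: "complex^'n::finite \<Rightarrow> complex^'n \<Rightarrow> complex" where
  "Wbf a u = 1 - (\<Sum>k\<in>UNIV. a$k * cnj (u$k))"
definition mnm :: "complex^'n::finite \<Rightarrow> nat \<Rightarrow> nat \<Rightarrow> nat \<Rightarrow> complex^'n \<Rightarrow> complex" where
  "mnm a e p q u = Rf u ^ e * inverse (Wf a u) ^ p * inverse (Wbf a u) ^ q"

lemma Wbf_cnj: "Wbf a u = cnj (Wf a u)"
  unfolding Wbf_def Wf_def by (simp add: mult.commute)

lemma Wbf_nz: "Wf a u \<noteq> 0 \<Longrightarrow> Wbf a u \<noteq> 0"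
  by (simp add: Wbf_cnj)

lemma Rf_diff[simp]: "Rf differentiable (at u)"
  unfolding Rf_def[abs_def] by (intro differentiable_diff differentiable_const differentiable_sum ballI differentiable_mult diff_coord diff_cnjcoord) auto
lemma Wf_diff[simp]: "Wf a differentiable (at u)"
  unfolding Wf_def[abs_def] by (intro differentiable_diff differentiable_const differentiable_sum ballI differentiable_mult diff_coord diff_cnjcoord) auto
lemma Wbf_diff[simp]: "Wbf a differentiable (at u)"
  unfolding Wbf_def[abs_def] by (intro differentiable_diff differentiable_const differentiable_sum ballI differentiable_mult diff_coord diff_cnjcoord) auto



lemma diff_cc: "(\<lambda>x::complex^'n::finite. x$k * cnj (x$k)) differentiable (at u)"
  by (intro differentiable_mult diff_coord diff_cnjcoord)

lemma lin_Rf: "lin j c d Rf u = - ((c - d * \<i>) * u$j + (c + d * \<i>) * cnj (u$j))"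
proof -
  have "lin j c d Rf u = lin j c d (\<lambda>x. 1 - (\<Sum>k\<in>UNIV. x$k * cnj (x$k))) u"
    by (simp add: Rf_def[abs_def])
  also have "\<dots> = - (\<Sum>k\<in>UNIV. lin j c d (\<lambda>x. x$k * cnj (x$k)) u)"
    apply (subst lin_diff)
    apply (rule differentiable_const)
    apply (rule differentiable_sum, simp, simp add: diff_cc)
    apply (subst lin_sum, simp, rule diff_cc)
    by (simp add: lin_const)
  also have "\<dots> = - (\<Sum>k\<in>UNIV. if k = j then (c - d * \<i>) * u$j + (c + d * \<i>) * cnj (u$j) else 0)"
    by (intro arg_cong[where f=uminus] sum.cong refl) (auto simp: lin_mult lin_coord lin_cnjcoord)
  finally show ?thesis by simp
qed

lemma lin_Wf: "lin j c d (Wf a) u = - ((c + d * \<i>) * cnj (a$j))"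
proof -
  have dd: "\<And>k. (\<lambda>x::complex^'a. cnj (a$k) * x$k) differentiable (at u)"
    by (intro differentiable_mult diff_coord differentiable_const)
  have "lin j c d (Wf a) u = lin j c d (\<lambda>x. 1 - (\<Sum>k\<in>UNIV. cnj (a$k) * x$k)) u"
    by (simp add: Wf_def[abs_def] mult.commute)
  also have "\<dots> = - (\<Sum>k\<in>UNIV. lin j c d (\<lambda>x. cnj (a$k) * x$k) u)"
    apply (subst lin_diff)
    apply (rule differentiable_const)
    apply (rule differentiable_sum, simp, simp add: dd)
    apply (subst lin_sum, simp, rule dd)
    by (simp add: lin_const)
  also have "\<dots> = - (\<Sum>k\<in>UNIV. if k = j then (c + d * \<i>) * cnj (a$j) else 0)"
    by (intro arg_cong[where f=uminus] sum.cong refl) (auto simp: lin_cmult lin_coord)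
  finally show ?thesis by simp
qed

lemma lin_Wbf: "lin j c d (Wbf a) u = - ((c - d * \<i>) * a$j)"
proof -
  have dd: "\<And>k. (\<lambda>x::complex^'a. a$k * cnj (x$k)) differentiable (at u)"
    by (intro differentiable_mult diff_cnjcoord differentiable_const)
  have "lin j c d (Wbf a) u = lin j c d (\<lambda>x. 1 - (\<Sum>k\<in>UNIV. a$k * cnj (x$k))) u"
    by (simp add: Wbf_def[abs_def])
  also have "\<dots> = - (\<Sum>k\<in>UNIV. lin j c d (\<lambda>x. a$k * cnj (x$k)) u)"
    apply (subst lin_diff)
    apply (rule differentiable_const)
    apply (rule differentiable_sum, simp, simp add: dd)
    apply (subst lin_sum, simp, rule dd)
    by (simp add: lin_const)
  also have "\<dots> = - (\<Sum>k\<in>UNIV. if k = j then (c - d * \<i>) * a$j else 0)"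
    by (intro arg_cong[where f=uminus] sum.cong refl) (auto simp: lin_cmult lin_cnjcoord)
  finally show ?thesis by simp
qed

lemma mono_diff: "Wf a u \<noteq> 0 \<Longrightarrow> mnm a e p q differentiable (at u)"
  unfolding mnm_def[abs_def] using Wbf_nz[of a u]
  by (intro differentiable_mult differentiable_power differentiable_inverse Rf_diff Wf_diff Wbf_diff) auto

lemma pow_pred_sq: "of_nat p * (x::complex) ^ (p - 1) * (x * x) = of_nat p * x ^ Suc p"
  by (cases p) (auto simp: power_Suc)

lemma lin_mono:
  assumes W: "Wf a u \<noteq> 0"
  shows "lin j c d (mnm a e p q) u =
     - of_nat e * ((c - d * \<i>) * u$j + (c + d * \<i>) * cnj (u$j)) * mnm a (e - 1) p q u
     + of_nat p * (c + d * \<i>) * cnj (a$j) * mnm a e (Suc p) q u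
     + of_nat q * (c - d * \<i>) * a$j * mnm a e p (Suc q) u"
proof -
  have Wb: "Wbf a u \<noteq> 0" using W by (rule Wbf_nz)
  define X where "X = inverse (Wf a u)"
  define Y where "Y = inverse (Wbf a u)"
  have dX: "lin j c d (\<lambda>x. inverse (Wf a x)) u = X * X * ((c + d * \<i>) * cnj (a$j))"
    using lin_inverse[OF Wf_diff W] by (simp add: lin_Wf X_def)
  have dY: "lin j c d (\<lambda>x. inverse (Wbf a x)) u = Y * Y * ((c - d * \<i>) * a$j)"
    using lin_inverse[OF Wbf_diff Wb] by (simp add: lin_Wbf Y_def)
  have "lin j c d (mnm a e p q) u =
     lin j c d (\<lambda>x. Rf x ^ e * inverse (Wf a x) ^ p * inverse (Wbf a x) ^ q) u"
    by (simp add: mnm_def[abs_def])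
  also have "\<dots> = Rf u ^ e * X ^ p * (of_nat q * Y ^ (q - 1) * (Y * Y * ((c - d * \<i>) * a$j)))
     + (Rf u ^ e * (of_nat p * X ^ (p - 1) * (X * X * ((c + d * \<i>) * cnj (a$j))))
        + of_nat e * Rf u ^ (e - 1) * lin j c d Rf u * X ^ p) * Y ^ q"
  proof -
    have dA: "(\<lambda>x. Rf x ^ e) differentiable (at u)" by (intro differentiable_power Rf_diff)
    have dB0: "(\<lambda>x. inverse (Wf a x)) differentiable (at u)" using W by (intro differentiable_inverse Wf_diff)
    have dC0: "(\<lambda>x. inverse (Wbf a x)) differentiable (at u)" using Wb by (intro differentiable_inverse Wbf_diff)
    have dB: "(\<lambda>x. inverse (Wf a x) ^ p) differentiable (at u)" using dB0 by (rule differentiable_power)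
    have dC: "(\<lambda>x. inverse (Wbf a x) ^ q) differentiable (at u)" using dC0 by (rule differentiable_power)
    have dAB: "(\<lambda>x. Rf x ^ e * inverse (Wf a x) ^ p) differentiable (at u)" using dA dB by (rule differentiable_mult)
    show ?thesis
      apply (subst lin_mult[OF dAB dC])
      apply (subst lin_mult[OF dA dB])
      apply (subst lin_power[OF dC0])
      apply (subst lin_power[OF dB0])
      apply (subst lin_power[OF Rf_diff])
      by (simp add: dX dY X_def Y_def)
  qed
  also have "\<dots> = - of_nat e * ((c - d * \<i>) * u$j + (c + d * \<i>) * cnj (u$j)) * (Rf u ^ (e - 1) * X ^ p * Y ^ q)
     + of_nat p * (c + d * \<i>) * cnj (a$j) * (Rf u ^ e * X ^ Suc p * Y ^ q)
     + of_nat q * (c - d * \<i>) * a$j * (Rf u ^ e * X ^ p * Y ^ Suc q)"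
  proof -
    have 1: "of_nat q * Y ^ (q - 1) * (Y * Y) = of_nat q * Y ^ Suc q" by (rule pow_pred_sq)
    have 2: "of_nat p * X ^ (p - 1) * (X * X) = of_nat p * X ^ Suc p" by (rule pow_pred_sq)
    have "Rf u ^ e * X ^ p * (of_nat q * Y ^ (q - 1) * (Y * Y * ((c - d * \<i>) * a$j)))
        = (of_nat q * Y ^ (q - 1) * (Y * Y)) * ((c - d * \<i>) * a$j * (Rf u ^ e * X ^ p))"
      by (simp only: ac_simps)
    also have "\<dots> = of_nat q * (c - d * \<i>) * a$j * (Rf u ^ e * X ^ p * Y ^ Suc q)"
      unfolding 1 by (simp only: ac_simps)
    finally have A: "Rf u ^ e * X ^ p * (of_nat q * Y ^ (q - 1) * (Y * Y * ((c - d * \<i>) * a$j)))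
        = of_nat q * (c - d * \<i>) * a$j * (Rf u ^ e * X ^ p * Y ^ Suc q)" .
    have "Rf u ^ e * (of_nat p * X ^ (p - 1) * (X * X * ((c + d * \<i>) * cnj (a$j)))) * Y ^ q
        = (of_nat p * X ^ (p - 1) * (X * X)) * ((c + d * \<i>) * cnj (a$j) * Rf u ^ e * Y ^ q)"
      by (simp only: ac_simps)
    also have "\<dots> = of_nat p * (c + d * \<i>) * cnj (a$j) * (Rf u ^ e * X ^ Suc p * Y ^ q)"
      unfolding 2 by (simp only: ac_simps)
    finally have B: "Rf u ^ e * (of_nat p * X ^ (p - 1) * (X * X * ((c + d * \<i>) * cnj (a$j)))) * Y ^ q
        = of_nat p * (c + d * \<i>) * cnj (a$j) * (Rf u ^ e * X ^ Suc p * Y ^ q)" .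
    have C: "(Rf u ^ e * (of_nat p * X ^ (p - 1) * (X * X * ((c + d * \<i>) * cnj (a$j))))
        + of_nat e * Rf u ^ (e - 1) * lin j c d Rf u * X ^ p) * Y ^ q
      = Rf u ^ e * (of_nat p * X ^ (p - 1) * (X * X * ((c + d * \<i>) * cnj (a$j)))) * Y ^ q
        + of_nat e * Rf u ^ (e - 1) * lin j c d Rf u * X ^ p * Y ^ q"
      by (rule distrib_right)
    show ?thesis
      apply (subst C) apply (subst A) apply (subst B) unfolding lin_Rf by (simp add: algebra_simps)
  qed
  finally show ?thesis by (simp add: mnm_def X_def Y_def)
qed

lemma dz_mono: "Wf a u \<noteq> 0 \<Longrightarrow> dz j (mnm a e p q) u =
   - of_nat e * cnj (u$j) * mnm a (e - 1) p q u + of_nat p * cnj (a$j) * mnm a e (Suc p) q u"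
proof -
  assume W: "Wf a u \<noteq> 0"
  have 1: "1/2 - (-\<i>/2) * \<i> = (0::complex)" "1/2 + (-\<i>/2) * \<i> = (1::complex)"
    by (simp_all add: field_simps)
  show ?thesis unfolding dz_lin lin_mono[OF W] 1 by simp
qed
lemma dzb_mono: "Wf a u \<noteq> 0 \<Longrightarrow> dzb j (mnm a e p q) u =
   - of_nat e * u$j * mnm a (e - 1) p q u + of_nat q * a$j * mnm a e p (Suc q) u"
proof -
  assume W: "Wf a u \<noteq> 0"
  have 1: "1/2 - (\<i>/2) * \<i> = (1::complex)" "1/2 + (\<i>/2) * \<i> = (0::complex)"
    by (simp_all add: field_simps)
  show ?thesis unfolding dzb_lin lin_mono[OF W] 1 by simp
qed



lemma dz_add: "f differentiable (at u) \<Longrightarrow> g differentiable (at u) \<Longrightarrow>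
   dz j (\<lambda>x. f x + g x) u = dz j f u + dz j g u"
  unfolding dz_lin by (rule lin_add)
lemma dz_diff: "f differentiable (at u) \<Longrightarrow> g differentiable (at u) \<Longrightarrow>
   dz j (\<lambda>x. f x - g x) u = dz j f u - dz j g u"
  unfolding dz_lin by (rule lin_diff)
lemma dz_mult: "f differentiable (at u) \<Longrightarrow> g differentiable (at u) \<Longrightarrow>
   dz j (\<lambda>x. f x * g x) u = f u * dz j g u + dz j f u * g u"
  unfolding dz_lin by (rule lin_mult)
lemma dz_cmult: "f differentiable (at u) \<Longrightarrow> dz j (\<lambda>x. c * f x) u = c * dz j f u"
  unfolding dz_lin by (rule lin_cmult)
lemma dz_cong: "open S \<Longrightarrow> u \<in> S \<Longrightarrow> (\<And>x. x \<in> S \<Longrightarrow> f x = g x) \<Longrightarrow> dz j f u = dz j g u"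
  unfolding dz_lin by (rule lin_cong)
lemma dzb_add: "f differentiable (at u) \<Longrightarrow> g differentiable (at u) \<Longrightarrow>
   dzb j (\<lambda>x. f x + g x) u = dzb j f u + dzb j g u"
  unfolding dzb_lin by (rule lin_add)
lemma dzb_diff: "f differentiable (at u) \<Longrightarrow> g differentiable (at u) \<Longrightarrow>
   dzb j (\<lambda>x. f x - g x) u = dzb j f u - dzb j g u"
  unfolding dzb_lin by (rule lin_diff)
lemma dzb_mult: "f differentiable (at u) \<Longrightarrow> g differentiable (at u) \<Longrightarrow>
   dzb j (\<lambda>x. f x * g x) u = f u * dzb j g u + dzb j f u * g u"
  unfolding dzb_lin by (rule lin_mult)
lemma dzb_cmult: "f differentiable (at u) \<Longrightarrow> dzb j (\<lambda>x. c * f x) u = c * dzb j f u"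
  unfolding dzb_lin by (rule lin_cmult)
lemma dzb_cong: "open S \<Longrightarrow> u \<in> S \<Longrightarrow> (\<And>x. x \<in> S \<Longrightarrow> f x = g x) \<Longrightarrow> dzb j f u = dzb j g u"
  unfolding dzb_lin by (rule lin_cong)

lemma Eop_cong: "open S \<Longrightarrow> u \<in> S \<Longrightarrow> (\<And>x. x \<in> S \<Longrightarrow> f x = g x) \<Longrightarrow> Eop s f u = Eop s g u"
  unfolding Eop_def using dz_cong[of S u f g] by simp
lemma Ebop_cong: "open S \<Longrightarrow> u \<in> S \<Longrightarrow> (\<And>x. x \<in> S \<Longrightarrow> f x = g x) \<Longrightarrow> Ebop s f u = Ebop s g u"
  unfolding Ebop_def using dzb_cong[of S u f g] by simp
lemma absE2_cong: "open S \<Longrightarrow> u \<in> S \<Longrightarrow> (\<And>x. x \<in> S \<Longrightarrow> f x = g x) \<Longrightarrow> absE2 s f u = absE2 s g u"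
  unfolding absE2_def by (rule Eop_cong[of S]) (auto intro: Ebop_cong[of S])
lemma lap_cong: "open S \<Longrightarrow> u \<in> S \<Longrightarrow> (\<And>x. x \<in> S \<Longrightarrow> f x = g x) \<Longrightarrow> lap f u = lap g u"
  unfolding lap_def by (intro sum.cong refl dz_cong[of S]) (auto intro: dzb_cong[of S])
lemma Qop_cong: "open S \<Longrightarrow> u \<in> S \<Longrightarrow> (\<And>x. x \<in> S \<Longrightarrow> f x = g x) \<Longrightarrow> Qop k f u = Qop k g u"
  unfolding Qop_def using absE2_cong[of S u f g] lap_cong[of S u f g] by simp
lemma invlap_cong: "open S \<Longrightarrow> u \<in> S \<Longrightarrow> (\<And>x. x \<in> S \<Longrightarrow> f x = g x) \<Longrightarrow> invlap f u = invlap g u"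
  unfolding invlap_def using absE2_cong[of S u f g] lap_cong[of S u f g] by simp

lemma sum_sep: "(\<Sum>j\<in>UNIV. f j + g j) = (\<Sum>j\<in>UNIV. f j) + (\<Sum>j\<in>UNIV. g j)"
  by (rule sum.distrib)

lemma Eop_add: "f differentiable (at u) \<Longrightarrow> g differentiable (at u) \<Longrightarrow>
   Eop s (\<lambda>x. f x + g x) u = Eop s f u + Eop s g u"
  unfolding Eop_def by (simp add: dz_add algebra_simps sum.distrib)
lemma Eop_diff: "f differentiable (at u) \<Longrightarrow> g differentiable (at u) \<Longrightarrow>
   Eop s (\<lambda>x. f x - g x) u = Eop s f u - Eop s g u"
  unfolding Eop_def by (simp add: dz_diff algebra_simps sum_subtractf)
lemma Eop_cmult: "f differentiable (at u) \<Longrightarrow> Eop s (\<lambda>x. c * f x) u = c * Eop s f u"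
  unfolding Eop_def by (simp add: dz_cmult algebra_simps sum_distrib_left)
lemma Ebop_add: "f differentiable (at u) \<Longrightarrow> g differentiable (at u) \<Longrightarrow>
   Ebop s (\<lambda>x. f x + g x) u = Ebop s f u + Ebop s g u"
  unfolding Ebop_def by (simp add: dzb_add algebra_simps sum.distrib)
lemma Ebop_diff: "f differentiable (at u) \<Longrightarrow> g differentiable (at u) \<Longrightarrow>
   Ebop s (\<lambda>x. f x - g x) u = Ebop s f u - Ebop s g u"
  unfolding Ebop_def by (simp add: dzb_diff algebra_simps sum_subtractf)
lemma Ebop_cmult: "f differentiable (at u) \<Longrightarrow> Ebop s (\<lambda>x. c * f x) u = c * Ebop s f u"
  unfolding Ebop_def by (simp add: dzb_cmult algebra_simps sum_distrib_left)

lemma sum4: fixes u a :: "complex^'n::finite" shows "(\<Sum>j\<in>UNIV. A * (u$j * cnj (u$j)) + B * (u$j * cnj (a$j)) + C * (a$j * cnj (u$j))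
     + D * (a$j * cnj (a$j)) + E) =
   A * (1 - Rf u) + B * (1 - Wf a u) + C * (1 - Wbf a u) + D * (1 - Rf a) + E * of_nat CARD('n)"
  by (simp add: sum.distrib sum_distrib_left[symmetric] Rf_def Wf_def Wbf_def)

lemma mono_R: "Rf u * mnm a e p q u = mnm a (Suc e) p q u"
  unfolding mnm_def by simp
lemma mono_W: "Wf a u \<noteq> 0 \<Longrightarrow> Wf a u * mnm a e (Suc p) q u = mnm a e p q u"
  unfolding mnm_def by (simp add: field_simps)
lemma mono_Wb: "Wf a u \<noteq> 0 \<Longrightarrow> Wbf a u * mnm a e p (Suc q) u = mnm a e p q u"
  using Wbf_nz[of a u] unfolding mnm_def by (simp add: field_simps)

lemma oneR: "of_nat e * ((1 - Rf u) * mnm a (e - 1) p q u) = of_nat e * (mnm a (e - 1) p q u - mnm a e p q u)"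
  by (cases e) (simp_all add: algebra_simps mono_R)



lemma open_W: "open {x. Wf a x \<noteq> 0}"
proof -
  have "continuous_on UNIV (Wf a)"
    by (rule differentiable_imp_continuous_on) (auto intro: differentiable_at_imp_differentiable_on)
  then show ?thesis using open_Collect_neq[of "Wf a" "\<lambda>x. 0"] by auto
qed

lemma Ebop_mono:
  assumes W: "Wf a u \<noteq> 0"
  shows "Ebop s (mnm a e p q) u = (of_real s + of_nat e - of_nat q) * mnm a e p q u
     - of_nat e * mnm a (e - 1) p q u + of_nat q * mnm a e p (Suc q) u"
proof -
  have "(\<Sum>j\<in>UNIV. cnj (u$j) * dzb j (mnm a e p q) u) =
     (\<Sum>j\<in>UNIV. (- of_nat e * mnm a (e - 1) p q u) * (u$j * cnj (u$j)) + 0 * (u$j * cnj (a$j))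
        + (of_nat q * mnm a e p (Suc q) u) * (a$j * cnj (u$j)) + 0 * (a$j * cnj (a$j)) + 0)"
    by (intro sum.cong refl) (simp add: dzb_mono W algebra_simps)
  also have "\<dots> = - of_nat e * ((1 - Rf u) * mnm a (e - 1) p q u)
      + of_nat q * ((1 - Wbf a u) * mnm a e p (Suc q) u)"
    unfolding sum4 by (simp add: algebra_simps)
  also have "\<dots> = - of_nat e * (mnm a (e - 1) p q u - mnm a e p q u)
      + of_nat q * (mnm a e p (Suc q) u - mnm a e p q u)"
    using oneR[of e u a p q] mono_Wb[OF W, of e p q]
    by (auto simp: algebra_simps)
  finally show ?thesis unfolding Ebop_def by (simp add: algebra_simps)
qed

lemma Eop_mono:
  assumes W: "Wf a u \<noteq> 0"
  shows "Eop s (mnm a e p q) u = (of_real s + of_nat e - of_nat p) * mnm a e p q u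
     - of_nat e * mnm a (e - 1) p q u + of_nat p * mnm a e (Suc p) q u"
proof -
  have "(\<Sum>j\<in>UNIV. u$j * dz j (mnm a e p q) u) =
     (\<Sum>j\<in>UNIV. (- of_nat e * mnm a (e - 1) p q u) * (u$j * cnj (u$j))
        + (of_nat p * mnm a e (Suc p) q u) * (u$j * cnj (a$j))
        + 0 * (a$j * cnj (u$j)) + 0 * (a$j * cnj (a$j)) + 0)"
    by (intro sum.cong refl) (simp add: dz_mono W algebra_simps)
  also have "\<dots> = - of_nat e * ((1 - Rf u) * mnm a (e - 1) p q u)
      + of_nat p * ((1 - Wf a u) * mnm a e (Suc p) q u)"
    unfolding sum4 by (simp add: algebra_simps)
  also have "\<dots> = - of_nat e * (mnm a (e - 1) p q u - mnm a e p q u)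
      + of_nat p * (mnm a e (Suc p) q u - mnm a e p q u)"
    using oneR[of e u a p q] mono_W[OF W, of e p q]
    by (auto simp: algebra_simps)
  finally show ?thesis unfolding Eop_def by (simp add: algebra_simps)
qed

lemma oneR2: "of_nat e * of_nat (e - 1) * ((1 - Rf u) * mnm a (e - 1 - 1) p q u)
   = of_nat e * of_nat (e - 1) * (mnm a (e - 1 - 1) p q u - mnm a (e - 1) p q u)"
proof (cases e)
  case (Suc e')
  then show ?thesis by (cases e') (simp_all add: algebra_simps mono_R)
qed simp

lemma oneW: "Wf a u \<noteq> 0 \<Longrightarrow> (1 - Wf a u) * mnm a e (Suc p) q u = mnm a e (Suc p) q u - mnm a e p q u"
  by (simp add: left_diff_distrib mono_W)
lemma oneWb: "Wf a u \<noteq> 0 \<Longrightarrow> (1 - Wbf a u) * mnm a e p (Suc q) u = mnm a e p (Suc q) u - mnm a e p q u"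
  by (simp add: left_diff_distrib mono_Wb)

lemma lap_mono:
  fixes u a :: "complex^'n::finite"
  assumes W: "Wf a u \<noteq> 0"
  shows "lap (mnm a e p q) u =
      of_nat e * of_nat (e - 1) * (mnm a (e - 1 - 1) p q u - mnm a (e - 1) p q u)
    - of_nat e * of_nat p * (mnm a (e - 1) (Suc p) q u - mnm a (e - 1) p q u)
    - of_nat q * of_nat e * (mnm a (e - 1) p (Suc q) u - mnm a (e - 1) p q u)
    + of_nat p * of_nat q * (1 - Rf a) * mnm a e (Suc p) (Suc q) u
    - of_nat e * of_nat CARD('n) * mnm a (e - 1) p q u"
proof -
  let ?S = "{x. Wf a x \<noteq> 0}"
  have uS: "u \<in> ?S" using W by simp
  have step: "dz j (dzb j (mnm a e p q)) u =
     of_nat q * a$j * (- of_nat e * cnj (u$j) * mnm a (e - 1) p (Suc q) u + of_nat p * cnj (a$j) * mnm a e (Suc p) (Suc q) u)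
     - of_nat e * (u$j * (- of_nat (e - 1) * cnj (u$j) * mnm a (e - 1 - 1) p q u + of_nat p * cnj (a$j) * mnm a (e - 1) (Suc p) q u)
         + mnm a (e - 1) p q u)" for j
  proof -
    have "dz j (dzb j (mnm a e p q)) u =
        dz j (\<lambda>x. (of_nat q * a$j) * mnm a e p (Suc q) x - of_nat e * (x$j * mnm a (e - 1) p q x)) u"
      by (rule dz_cong[OF open_W uS]) (simp add: dzb_mono algebra_simps)
    also have "\<dots> = of_nat q * a$j * dz j (mnm a e p (Suc q)) u
        - of_nat e * (u$j * dz j (mnm a (e - 1) p q) u + dz j (\<lambda>x. x$j) u * mnm a (e - 1) p q u)"
      using mono_diff[OF W]
      by (simp add: dz_diff dz_cmult dz_mult)
    finally show ?thesis by (simp add: dz_mono W dz_coord)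
  qed
  have "lap (mnm a e p q) u =
     (\<Sum>j\<in>UNIV. (of_nat e * of_nat (e - 1) * mnm a (e - 1 - 1) p q u) * (u$j * cnj (u$j))
        + (- of_nat e * of_nat p * mnm a (e - 1) (Suc p) q u) * (u$j * cnj (a$j))
        + (- of_nat q * of_nat e * mnm a (e - 1) p (Suc q) u) * (a$j * cnj (u$j))
        + (of_nat p * of_nat q * mnm a e (Suc p) (Suc q) u) * (a$j * cnj (a$j))
        + (- of_nat e * mnm a (e - 1) p q u))"
    unfolding lap_def by (intro sum.cong refl) (simp add: step algebra_simps)
  also have "\<dots> = of_nat e * of_nat (e - 1) * ((1 - Rf u) * mnm a (e - 1 - 1) p q u)
    - of_nat e * of_nat p * ((1 - Wf a u) * mnm a (e - 1) (Suc p) q u)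
    - of_nat q * of_nat e * ((1 - Wbf a u) * mnm a (e - 1) p (Suc q) u)
    + of_nat p * of_nat q * (1 - Rf a) * mnm a e (Suc p) (Suc q) u
    - of_nat e * of_nat CARD('n) * mnm a (e - 1) p q u"
    unfolding sum4 by (simp add: algebra_simps)
  finally show ?thesis
    unfolding oneR2 oneW[OF W] oneWb[OF W] by (simp add: algebra_simps)
qed



lemma alg_sym:
  fixes K E E1 P N Ra A2 B2 Mpp M1 M2 B1 :: complex
  assumes "K + E = P" "E = E1 + 1"
  shows "P * ((K + E - P) * A2 - E * B2 + P * Mpp)
     - E * ((K + E1 - P) * M1 - E1 * M2 + P * B1)
     - (E * E1 * (M2 - M1) - E * P * (B1 - M1) - P * E * (B2 - M1)
        + P * P * (1 - Ra) * Mpp - E * N * M1)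
   = P * P * Ra * Mpp - E * (2 * K + E - N) * M1"
proof -
  have P: "P = K + E" using assms(1) by simp
  show ?thesis unfolding P by (simp add: algebra_simps)
qed

lemma alg_sym0:
  fixes K P N Ra A2 B2 Mpp M1 M2 B1 :: complex
  assumes "K = P"
  shows "P * ((K + 0 - P) * A2 - 0 * B2 + P * Mpp)
     - 0 * ((K + 0 - P) * M1 - 0 * M2 + P * B1)
     - (0 * 0 * (M2 - M1) - 0 * P * (B1 - M1) - P * 0 * (B2 - M1)
        + P * P * (1 - Ra) * Mpp - 0 * N * M1)
   = P * P * Ra * Mpp - 0 * (2 * K + 0 - N) * M1"
  using assms by (simp add: algebra_simps)

lemma Qop_mono_sym:
  fixes u a :: "complex^'n::finite"
  assumes W: "Wf a u \<noteq> 0" and kep: "k + e = p"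
  shows "Qop k (mnm a e p p) u = of_nat p * of_nat p * Rf a * mnm a e (Suc p) (Suc p) u
     - of_nat e * (2 * of_nat k + of_nat e - of_nat CARD('n)) * mnm a (e - 1) p p u"
proof -
  let ?S = "{x. Wf a x \<noteq> 0}"
  have uS: "u \<in> ?S" using W by simp
  have c0: "complex_of_real (real k) + of_nat e - of_nat p = 0"
    using kep by (simp flip: of_nat_add)
  have c1: "complex_of_nat k + of_nat e = of_nat p"
    using kep by (simp flip: of_nat_add)
  have dM: "\<And>e p q. mnm a e p q differentiable (at u)" using mono_diff[OF W] .
  have "absE2 (real k) (mnm a e p p) u = Eop (real k) (\<lambda>x. of_nat p * mnm a e p (Suc p) x - of_nat e * mnm a (e - 1) p p x) u"
    unfolding absE2_def
    by (rule Eop_cong[OF open_W uS]) (simp add: Ebop_mono c0 c1)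
  also have "\<dots> = of_nat p * Eop (real k) (mnm a e p (Suc p)) u - of_nat e * Eop (real k) (mnm a (e - 1) p p) u"
    using dM by (simp add: Eop_diff Eop_cmult)
  also have "\<dots> = of_nat p * ((of_real (real k) + of_nat e - of_nat p) * mnm a e p (Suc p) u
     - of_nat e * mnm a (e - 1) p (Suc p) u + of_nat p * mnm a e (Suc p) (Suc p) u)
     - of_nat e * ((of_real (real k) + of_nat (e - 1) - of_nat p) * mnm a (e - 1) p p u
     - of_nat (e - 1) * mnm a (e - 1 - 1) p p u + of_nat p * mnm a (e - 1) (Suc p) p u)"
    by (simp add: Eop_mono W)
  finally have A: "absE2 (real k) (mnm a e p p) u = \<dots>" .
  have L: "lap (mnm a e p p) u =
      of_nat e * of_nat (e - 1) * (mnm a (e - 1 - 1) p p u - mnm a (e - 1) p p u)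
    - of_nat e * of_nat p * (mnm a (e - 1) (Suc p) p u - mnm a (e - 1) p p u)
    - of_nat p * of_nat e * (mnm a (e - 1) p (Suc p) u - mnm a (e - 1) p p u)
    + of_nat p * of_nat p * (1 - Rf a) * mnm a e (Suc p) (Suc p) u
    - of_nat e * of_nat CARD('n) * mnm a (e - 1) p p u"
    by (rule lap_mono[OF W])
  show ?thesis
  proof (cases e)
    case 0
    have "complex_of_nat k = of_nat p" using c1 0 by simp
    then show ?thesis unfolding Qop_def A L unfolding 0 by (simp add: algebra_simps)
  next
    case (Suc e')
    have ee: "complex_of_nat e = of_nat (e - 1) + 1" using Suc by simp
    have "complex_of_real (real k) = of_nat k" by simp
    from alg_sym[OF c1 ee] show ?thesis unfolding Qop_def A L by simp
  qed
qed



definition C2 :: "(complex^'n::finite) set \<Rightarrow> 'n cfun \<Rightarrow> bool" where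
  "C2 S h \<longleftrightarrow> (\<forall>u\<in>S. h differentiable (at u)) \<and>
     (\<forall>j. \<forall>u\<in>S. dz j h differentiable (at u) \<and> dzb j h differentiable (at u))"

lemma dz_Rf: "dz j Rf u = - cnj (u$j)"
proof -
  have 1: "1/2 - (-\<i>/2) * \<i> = (0::complex)" "1/2 + (-\<i>/2) * \<i> = (1::complex)"
    by (simp_all add: field_simps)
  show ?thesis unfolding dz_lin lin_Rf 1 by simp
qed
lemma dzb_Rf: "dzb j Rf u = - u$j"
proof -
  have 1: "1/2 - (\<i>/2) * \<i> = (1::complex)" "1/2 + (\<i>/2) * \<i> = (0::complex)"
    by (simp_all add: field_simps)
  show ?thesis unfolding dzb_lin lin_Rf 1 by simp
qed

lemma Rfk_diff: "(\<lambda>x. Rf x ^ k) differentiable (at u)"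
  by (intro differentiable_power Rf_diff)

lemma dz_Rfk: "dz j (\<lambda>x. Rf x ^ k) u = - of_nat k * Rf u ^ (k - 1) * cnj (u$j)"
  using dz_Rf[of j u] unfolding dz_lin by (subst lin_power[OF Rf_diff]) simp
lemma dzb_Rfk: "dzb j (\<lambda>x. Rf x ^ k) u = - of_nat k * Rf u ^ (k - 1) * u$j"
  unfolding dzb_lin by (subst lin_power[OF Rf_diff]) (simp add: dzb_Rf[unfolded dzb_lin])

lemma powk: "of_nat k * (R::complex) ^ (k - 1) * R = of_nat k * R ^ k"
  by (cases k) (simp_all add: algebra_simps)

lemma sum_uu: "(\<Sum>j\<in>UNIV. u$j * cnj (u$j)) = 1 - Rf u"
  unfolding Rf_def by simp

lemma Eop_Rk:
  assumes g: "g differentiable (at u)"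
  shows "Eop s (\<lambda>x. Rf x ^ k * g x) u = Rf u ^ k * Eop (s + real k) g u - of_nat k * Rf u ^ (k - 1) * g u"
proof -
  have "(\<Sum>j\<in>UNIV. u$j * dz j (\<lambda>x. Rf x ^ k * g x) u) =
     Rf u ^ k * (\<Sum>j\<in>UNIV. u$j * dz j g u) - of_nat k * Rf u ^ (k - 1) * g u * (\<Sum>j\<in>UNIV. u$j * cnj (u$j))"
  proof -
    have "(\<Sum>j\<in>UNIV. u$j * dz j (\<lambda>x. Rf x ^ k * g x) u) =
       (\<Sum>j\<in>UNIV. Rf u ^ k * (u$j * dz j g u) - (of_nat k * Rf u ^ (k - 1) * g u) * (u$j * cnj (u$j)))"
      by (intro sum.cong refl) (simp only: dz_mult[OF Rfk_diff g] dz_Rfk, simp add: algebra_simps)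
    then show ?thesis by (simp add: sum_subtractf sum_distrib_left)
  qed
  then show ?thesis unfolding Eop_def sum_uu using powk[of k "Rf u"]
    by (auto simp: algebra_simps)
qed

lemma Ebop_Rk:
  assumes g: "g differentiable (at u)"
  shows "Ebop s (\<lambda>x. Rf x ^ k * g x) u = Rf u ^ k * Ebop (s + real k) g u - of_nat k * Rf u ^ (k - 1) * g u"
proof -
  have "(\<Sum>j\<in>UNIV. cnj (u$j) * dzb j (\<lambda>x. Rf x ^ k * g x) u) =
     Rf u ^ k * (\<Sum>j\<in>UNIV. cnj (u$j) * dzb j g u) - of_nat k * Rf u ^ (k - 1) * g u * (\<Sum>j\<in>UNIV. u$j * cnj (u$j))"
  proof -
    have "(\<Sum>j\<in>UNIV. cnj (u$j) * dzb j (\<lambda>x. Rf x ^ k * g x) u) =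
       (\<Sum>j\<in>UNIV. Rf u ^ k * (cnj (u$j) * dzb j g u) - (of_nat k * Rf u ^ (k - 1) * g u) * (u$j * cnj (u$j)))"
      by (intro sum.cong refl) (simp only: dzb_mult[OF Rfk_diff g] dzb_Rfk, simp add: algebra_simps)
    then show ?thesis by (simp add: sum_subtractf sum_distrib_left)
  qed
  then show ?thesis unfolding Ebop_def sum_uu using powk[of k "Rf u"]
    by (auto simp: algebra_simps)
qed

lemma Ebop_fun: "Ebop s h = (\<lambda>z. (\<Sum>j\<in>UNIV. cnj (z$j) * dzb j h z) + of_real s * h z)"
  by (rule ext) (simp add: Ebop_def)
lemma Eop_fun: "Eop s h = (\<lambda>z. (\<Sum>j\<in>UNIV. z$j * dz j h z) + of_real s * h z)"
  by (rule ext) (simp add: Eop_def)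

lemma C2_D: "C2 S h \<Longrightarrow> u \<in> S \<Longrightarrow> h differentiable (at u)"
  "C2 S h \<Longrightarrow> u \<in> S \<Longrightarrow> dz j h differentiable (at u)"
  "C2 S h \<Longrightarrow> u \<in> S \<Longrightarrow> dzb j h differentiable (at u)"
  unfolding C2_def by auto

lemma Ebop_diffable: "C2 S h \<Longrightarrow> u \<in> S \<Longrightarrow> Ebop s h differentiable (at u)"
  unfolding Ebop_fun
  by (intro differentiable_add differentiable_sum ballI differentiable_mult diff_cnjcoord
      differentiable_const C2_D[of S h u]) auto
lemma Eop_diffable: "C2 S h \<Longrightarrow> u \<in> S \<Longrightarrow> Eop s h differentiable (at u)"
  unfolding Eop_fun
  by (intro differentiable_add differentiable_sum ballI differentiable_mult diff_coord
      differentiable_const C2_D[of S h u]) auto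

lemma sum5: fixes f g h w :: "'n::finite \<Rightarrow> complex"
  shows "(\<Sum>j\<in>UNIV. A * f j - B * g j - C * h j - D + E * w j) =
   A * sum f UNIV - B * sum g UNIV - C * sum h UNIV - D * of_nat CARD('n) + E * sum w UNIV"
  by (simp add: sum.distrib sum_subtractf sum_distrib_left)

lemma lap_Rk:
  fixes h :: "'n::finite cfun"
  assumes S: "open S" and h: "C2 S h" and uS: "u \<in> S"
  shows "lap (\<lambda>x. Rf x ^ k * h x) u = Rf u ^ k * lap h u
     - of_nat k * Rf u ^ (k - 1) * (\<Sum>j\<in>UNIV. u$j * dz j h u)
     - of_nat k * Rf u ^ (k - 1) * (\<Sum>j\<in>UNIV. cnj (u$j) * dzb j h u)
     - of_nat k * Rf u ^ (k - 1) * h u * of_nat CARD('n)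
     + of_nat k * of_nat (k - 1) * Rf u ^ (k - 1 - 1) * h u * (1 - Rf u)"
proof -
  have step: "dz j (dzb j (\<lambda>x. Rf x ^ k * h x)) u =
     Rf u ^ k * dz j (dzb j h) u
     - (of_nat k * Rf u ^ (k - 1)) * (cnj (u$j) * dzb j h u)
     - (of_nat k * Rf u ^ (k - 1)) * (u$j * dz j h u)
     - (of_nat k * Rf u ^ (k - 1)) * h u
     + (of_nat k * of_nat (k - 1) * Rf u ^ (k - 1 - 1) * h u) * (u$j * cnj (u$j))" for j
  proof -
    have "dz j (dzb j (\<lambda>x. Rf x ^ k * h x)) u =
       dz j (\<lambda>x. Rf x ^ k * dzb j h x - of_nat k * (Rf x ^ (k - 1) * (x$j * h x))) u"
    proof (rule dz_cong[OF S uS])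
      fix x assume xS: "x \<in> S"
      show "dzb j (\<lambda>x. Rf x ^ k * h x) x = Rf x ^ k * dzb j h x - of_nat k * (Rf x ^ (k - 1) * (x$j * h x))"
        by (simp only: dzb_mult[OF Rfk_diff C2_D(1)[OF h xS]] dzb_Rfk) (simp add: algebra_simps)
    qed
    also have "\<dots> = Rf u ^ k * dz j (dzb j h) u + dz j (\<lambda>x. Rf x ^ k) u * dzb j h u
       - of_nat k * (Rf u ^ (k - 1) * (u$j * dz j h u + dz j (\<lambda>x. x$j) u * h u)
          + dz j (\<lambda>x. Rf x ^ (k - 1)) u * (u$j * h u))"
      using C2_D[OF h uS]
      by (simp add: dz_diff dz_cmult dz_mult Rfk_diff)
    finally show ?thesis by (simp add: dz_Rfk dz_coord algebra_simps)
  qed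
  show ?thesis
    unfolding lap_def step sum5 sum_uu
    by (simp add: algebra_simps)
qed

lemma alg_Rk:
  fixes Rk R1 R0 R A Lh Eh Ebh H K K1 N :: complex
  assumes "K = K1 + 1" "K * K1 * R0 * R = K * K1 * R1"
  shows "(Rk * A - K * R1 * (Ebh + K * H)) - K * (R1 * (Eh + K1 * H) - K1 * R0 * H)
     - (Rk * Lh - K * R1 * Eh - K * R1 * Ebh - K * R1 * H * N + K * K1 * R0 * H * (1 - R))
     = Rk * (A - Lh) - K * (K - N) * R1 * H"
proof -
  have 1: "K * K1 * R0 * H * (1 - R) = K * K1 * R0 * H - K * K1 * R1 * H"
  proof -
    have "K * K1 * R0 * H * (1 - R) = K * K1 * R0 * H - (K * K1 * R0 * R) * H"
      by (simp add: algebra_simps)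
    then show ?thesis unfolding assms(2) .
  qed
  show ?thesis unfolding 1 unfolding assms(1) by (simp add: algebra_simps)
qed

lemma powk2: "of_nat k * of_nat (k - 1) * (R::complex) ^ (k - 1 - 1) * R = of_nat k * of_nat (k - 1) * R ^ (k - 1)"
proof (cases k)
  case (Suc k')
  then show ?thesis by (cases k') (simp_all add: algebra_simps)
qed simp

lemma Qop_Rk:
  fixes h :: "'n::finite cfun"
  assumes S: "open S" and h: "C2 S h" and uS: "u \<in> S" and k: "k \<ge> 1"
  shows "absE2 0 (\<lambda>x. Rf x ^ k * h x) u - lap (\<lambda>x. Rf x ^ k * h x) u =
     Rf u ^ k * Qop k h u - of_nat k * (of_nat k - of_nat CARD('n)) * Rf u ^ (k - 1) * h u"
proof -
  have dE: "Ebop (real k) h differentiable (at u)" by (rule Ebop_diffable[OF h uS])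
  have dh: "h differentiable (at u)" by (rule C2_D(1)[OF h uS])
  have "absE2 0 (\<lambda>x. Rf x ^ k * h x) u =
     Eop 0 (\<lambda>x. Rf x ^ k * Ebop (real k) h x - of_nat k * (Rf x ^ (k - 1) * h x)) u"
    unfolding absE2_def
    by (rule Eop_cong[OF S uS]) (simp add: Ebop_Rk[OF C2_D(1)[OF h]])
  also have "\<dots> = Eop 0 (\<lambda>x. Rf x ^ k * Ebop (real k) h x) u - of_nat k * Eop 0 (\<lambda>x. Rf x ^ (k - 1) * h x) u"
    using dE dh
    by (simp add: Eop_diff Eop_cmult Rfk_diff)
  also have "\<dots> = (Rf u ^ k * absE2 (real k) h u - of_nat k * Rf u ^ (k - 1) * Ebop (real k) h u)
     - of_nat k * (Rf u ^ (k - 1) * Eop (real (k - 1)) h u - of_nat (k - 1) * Rf u ^ (k - 1 - 1) * h u)"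
    by (simp add: Eop_Rk[OF dE] Eop_Rk[OF dh] absE2_def)
  finally have A: "absE2 0 (\<lambda>x. Rf x ^ k * h x) u = \<dots>" .
  have Kk: "complex_of_nat k = of_nat (k - 1) + 1" using k by (cases k) auto
  have Rk: "Rf u ^ k = Rf u ^ (k - 1) * Rf u" using k by (cases k) auto
  have E1: "Ebop (real k) h u = (\<Sum>j\<in>UNIV. cnj (u$j) * dzb j h u) + of_nat k * h u"
    by (simp add: Ebop_def)
  have E2: "Eop (real (k - 1)) h u = (\<Sum>j\<in>UNIV. u$j * dz j h u) + of_nat (k - 1) * h u"
    by (simp add: Eop_def)
  show ?thesis
    unfolding A lap_Rk[OF S h uS] E1 E2 Qop_def
    using alg_Rk[OF Kk powk2[of k "Rf u"], of "Rf u ^ k" "absE2 (real k) h u"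
      "(\<Sum>j\<in>UNIV. cnj (u$j) * dzb j h u)" "h u" "(\<Sum>j\<in>UNIV. u$j * dz j h u)" "lap h u" "of_nat CARD('n)"]
    by (simp add: algebra_simps)
qed



lemma Rf_norm: "Rf u = of_real (1 - (norm u)^2)"
proof -
  have "(norm u)^2 = (\<Sum>i\<in>UNIV. (cmod (u$i))^2)"
    unfolding norm_vec_def L2_set_def by (simp add: sum_nonneg)
  then have "complex_of_real ((norm u)^2) = (\<Sum>i\<in>UNIV. complex_of_real ((cmod (u$i))^2))"
    by (simp only: of_real_sum)
  also have "\<dots> = (\<Sum>i\<in>UNIV. u$i * cnj (u$i))"
    by (simp only: complex_norm_square)
  finally have "complex_of_real ((norm u)^2) = (\<Sum>i\<in>UNIV. u$i * cnj (u$i))" .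
  then show ?thesis unfolding Rf_def by simp
qed

lemma pprod_eq:
  fixes f :: "'n::finite cfun"
  assumes S: "open S" and C: "\<And>j. C2 S (Qprod j f)"
  shows "u \<in> S \<Longrightarrow> pprod m f u = Rf u ^ Suc m * Qprod m f u"
proof (induction m arbitrary: u)
  case 0
  then show ?case by (simp only: pprod.simps invlap_def Rf_norm[symmetric] Qprod.simps Qop_def)
      (simp add: algebra_simps)
next
  case (Suc m)
  let ?h = "Qprod m f"
  have "invlap (pprod m f) u = invlap (\<lambda>x. Rf x ^ Suc m * ?h x) u"
    by (rule invlap_cong[OF S Suc.prems]) (rule Suc.IH)
  also have "\<dots> = - Rf u * (absE2 0 (\<lambda>x. Rf x ^ Suc m * ?h x) u - lap (\<lambda>x. Rf x ^ Suc m * ?h x) u)"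
    by (simp only: invlap_def Rf_norm[symmetric]) (simp add: algebra_simps)
  also have "\<dots> = - Rf u * (Rf u ^ Suc m * Qop (Suc m) ?h u
      - of_nat (Suc m) * (of_nat (Suc m) - of_nat CARD('n)) * Rf u ^ m * ?h u)"
    using Qop_Rk[OF S C Suc.prems, of "Suc m"] by simp
  finally have I: "invlap (pprod m f) u = \<dots>" .
  have c: "complex_of_real (real (Suc m) * (real (Suc m) - real CARD('n))) =
     of_nat (Suc m) * (of_nat (Suc m) - of_nat CARD('n))" by simp
  show ?case
    by (simp only: pprod.simps Let_def I c Suc.IH[OF Suc.prems] Qprod.simps) (simp add: algebra_simps)
qed



lemma C2_cong:
  assumes S: "open S" and eq: "\<And>x. x \<in> S \<Longrightarrow> f x = g x" and f: "C2 S f"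
  shows "C2 S g"
  unfolding C2_def
proof (intro conjI allI ballI)
  fix u assume uS: "u \<in> S"
  show "g differentiable (at u)" by (rule diff_cong[OF S uS eq C2_D(1)[OF f uS]])
next
  fix j u assume uS: "u \<in> S"
  show "dz j g differentiable (at u)"
    by (rule diff_cong[OF S uS _ C2_D(2)[OF f uS]]) (rule dz_cong[OF S _ eq])
  show "dzb j g differentiable (at u)"
    by (rule diff_cong[OF S uS _ C2_D(3)[OF f uS]]) (rule dzb_cong[OF S _ eq])
qed

lemma C2_lin:
  assumes S: "open S" and f: "C2 S f" and g: "C2 S g"
  shows "C2 S (\<lambda>x. c * f x + d * g x)"
  unfolding C2_def
proof (intro conjI allI ballI)
  fix u assume uS: "u \<in> S"
  show "(\<lambda>x. c * f x + d * g x) differentiable (at u)"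
    using C2_D(1)[OF f uS] C2_D(1)[OF g uS] by (intro differentiable_add differentiable_mult differentiable_const)
next
  fix j u assume uS: "u \<in> S"
  show "dz j (\<lambda>x. c * f x + d * g x) differentiable (at u)"
  proof (rule diff_cong[OF S uS])
    show "(\<lambda>x. c * dz j f x + d * dz j g x) differentiable (at u)"
      using C2_D(2)[OF f uS] C2_D(2)[OF g uS] by (intro differentiable_add differentiable_mult differentiable_const)
    fix x assume xS: "x \<in> S"
    show "c * dz j f x + d * dz j g x = dz j (\<lambda>x. c * f x + d * g x) x"
      using C2_D(1)[OF f xS] C2_D(1)[OF g xS]
      by (simp add: dz_add dz_cmult)
  qed
  show "dzb j (\<lambda>x. c * f x + d * g x) differentiable (at u)"
  proof (rule diff_cong[OF S uS])
    show "(\<lambda>x. c * dzb j f x + d * dzb j g x) differentiable (at u)"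
      using C2_D(3)[OF f uS] C2_D(3)[OF g uS] by (intro differentiable_add differentiable_mult differentiable_const)
    fix x assume xS: "x \<in> S"
    show "c * dzb j f x + d * dzb j g x = dzb j (\<lambda>x. c * f x + d * g x) x"
      using C2_D(1)[OF f xS] C2_D(1)[OF g xS]
      by (simp add: dzb_add dzb_cmult)
  qed
qed

lemma C2_mono: "C2 {x. Wf a x \<noteq> 0} (mnm a e p q)"
  unfolding C2_def
proof (intro conjI allI ballI)
  fix u assume uS: "u \<in> {x. Wf a x \<noteq> 0}"
  then show "mnm a e p q differentiable (at u)" using mono_diff by auto
next
  fix j u assume uS: "u \<in> {x. Wf a x \<noteq> 0}"
  have dM: "\<And>e p q. mnm a e p q differentiable (at u)" using mono_diff uS by auto
  show "dz j (mnm a e p q) differentiable (at u)"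
  proof (rule diff_cong[OF open_W uS])
    show "(\<lambda>x. - of_nat e * cnj (x$j) * mnm a (e - 1) p q x + of_nat p * cnj (a$j) * mnm a e (Suc p) q x)
      differentiable (at u)"
      using dM by (intro differentiable_add differentiable_mult differentiable_const differentiable_minus diff_cnjcoord)
  qed (simp add: dz_mono)
  show "dzb j (mnm a e p q) differentiable (at u)"
  proof (rule diff_cong[OF open_W uS])
    show "(\<lambda>x. - of_nat e * x$j * mnm a (e - 1) p q x + of_nat q * a$j * mnm a e p (Suc q) x)
      differentiable (at u)"
      using dM by (intro differentiable_add differentiable_mult differentiable_const differentiable_minus diff_coord)
  qed (simp add: dzb_mono)
qed

lemma Qop_lin:
  assumes S: "open S" and f: "C2 S f" and g: "C2 S g" and uS: "u \<in> S"
  shows "Qop k (\<lambda>x. c * f x + d * g x) u = c * Qop k f u + d * Qop k g u"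
proof -
  have df: "\<And>x. x \<in> S \<Longrightarrow> (\<lambda>x. c * f x) differentiable (at x)"
    using C2_D(1)[OF f] by (intro differentiable_mult differentiable_const)
  have dg: "\<And>x. x \<in> S \<Longrightarrow> (\<lambda>x. d * g x) differentiable (at x)"
    using C2_D(1)[OF g] by (intro differentiable_mult differentiable_const)
  have "absE2 (real k) (\<lambda>x. c * f x + d * g x) u =
     Eop (real k) (\<lambda>x. c * Ebop (real k) f x + d * Ebop (real k) g x) u"
    unfolding absE2_def
    by (rule Eop_cong[OF S uS]) (simp add: Ebop_add df dg Ebop_cmult C2_D(1)[OF f] C2_D(1)[OF g])
  also have "\<dots> = c * absE2 (real k) f u + d * absE2 (real k) g u"
    unfolding absE2_def
    using Ebop_diffable[OF f uS] Ebop_diffable[OF g uS]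
    by (simp add: Eop_add Eop_cmult)
  finally have A: "absE2 (real k) (\<lambda>x. c * f x + d * g x) u = \<dots>" .
  have "lap (\<lambda>x. c * f x + d * g x) u = (\<Sum>j\<in>UNIV. dz j (\<lambda>x. c * dzb j f x + d * dzb j g x) u)"
    unfolding lap_def
    by (intro sum.cong refl dz_cong[OF S uS]) (simp add: dzb_add df dg dzb_cmult C2_D(1)[OF f] C2_D(1)[OF g])
  also have "\<dots> = c * lap f u + d * lap g u"
    unfolding lap_def
    using C2_D(3)[OF f uS] C2_D(3)[OF g uS]
    by (simp add: dz_add dz_cmult sum.distrib sum_distrib_left)
  finally have L: "lap (\<lambda>x. c * f x + d * g x) u = \<dots>" .
  show ?thesis unfolding Qop_def A L by (simp add: algebra_simps)
qed



definition c1 :: "complex^'n::finite \<Rightarrow> nat \<Rightarrow> complex" where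
  "c1 a j = of_nat (fact j) ^ 2 * Rf a ^ j * of_nat (Suc j) * (of_nat CARD('n) - 1 - of_nat j)"
definition c2 :: "complex^'n::finite \<Rightarrow> nat \<Rightarrow> complex" where
  "c2 a j = of_nat (fact (Suc j)) ^ 2 * Rf a ^ Suc j"

definition QK :: "complex^'n::finite \<Rightarrow> nat \<Rightarrow> 'n cfun" where
  "QK a j = (\<lambda>x. c1 a j * mnm a 0 (Suc j) (Suc j) x + c2 a j * mnm a 1 (Suc (Suc j)) (Suc (Suc j)) x)"

lemma C2_QK: "C2 {x. Wf a x \<noteq> 0} (QK a j)"
  unfolding QK_def by (rule C2_lin[OF open_W C2_mono C2_mono])

lemma alg_step:
  fixes F t J N Ra :: complex
  shows "F^2 * t * (J + 1) * (N - 1 - J) * ((J + 1) * (J + 1) * Ra)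
     - ((J + 1) * F)^2 * t * Ra * (2 * (J + 1) + 1 - N)
     = ((J + 1) * F)^2 * (t * Ra) * (J + 1 + 1) * (N - 1 - (J + 1))"
  by (simp add: algebra_simps power2_eq_square)

lemma Qprod_K:
  fixes a :: "complex^'n::finite"
  shows "u \<in> {x. Wf a x \<noteq> 0} \<Longrightarrow> Qprod j (mnm a 1 1 1) u = QK a j u"
proof (induction j arbitrary: u)
  case 0
  then have W: "Wf a u \<noteq> 0" by simp
  show ?case
    using Qop_mono_sym[OF W, of 0 1 1]
    by (simp add: QK_def c1_def c2_def algebra_simps)
next
  case (Suc j)
  then have W: "Wf a u \<noteq> 0" by simp
  have "Qprod (Suc j) (mnm a 1 1 1) u = Qop (Suc j) (QK a j) u"
    by (simp only: Qprod.simps) (rule Qop_cong[OF open_W Suc.prems Suc.IH])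
  also have "\<dots> = c1 a j * Qop (Suc j) (mnm a 0 (Suc j) (Suc j)) u
      + c2 a j * Qop (Suc j) (mnm a 1 (Suc (Suc j)) (Suc (Suc j))) u"
    unfolding QK_def by (rule Qop_lin[OF open_W C2_mono C2_mono Suc.prems])
  also have "\<dots> = c1 a j * (of_nat (Suc j) * of_nat (Suc j) * Rf a * mnm a 0 (Suc (Suc j)) (Suc (Suc j)) u)
      + c2 a j * (of_nat (Suc (Suc j)) * of_nat (Suc (Suc j)) * Rf a * mnm a 1 (Suc (Suc (Suc j))) (Suc (Suc (Suc j))) u
        - (2 * of_nat (Suc j) + 1 - of_nat CARD('n)) * mnm a 0 (Suc (Suc j)) (Suc (Suc j)) u)"
    using Qop_mono_sym[OF W, of "Suc j" 0 "Suc j"] Qop_mono_sym[OF W, of "Suc j" 1 "Suc (Suc j)"]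
    by simp
  also have "\<dots> = QK a (Suc j) u"
  proof -
    have e1: "c1 a j * (of_nat (Suc j) * of_nat (Suc j) * Rf a) - c2 a j * (2 * of_nat (Suc j) + 1 - of_nat CARD('n))
       = c1 a (Suc j)"
      unfolding c1_def c2_def
      using alg_step[of "of_nat (fact j)" "Rf a ^ j" "of_nat j" "of_nat CARD('n)" "Rf a"]
      by (simp add: algebra_simps)
    have e2: "c2 a j * (of_nat (Suc (Suc j)) * of_nat (Suc (Suc j)) * Rf a) = c2 a (Suc j)"
      unfolding c2_def by (simp add: algebra_simps power2_eq_square)
    show ?thesis unfolding QK_def e1[symmetric] e2[symmetric] by (simp add: algebra_simps)
  qed
  finally show ?case .
qed



lemma cs_bound:
  fixes u a :: "complex^'n::finite"
  shows "cmod (\<Sum>k\<in>UNIV. u$k * cnj (a$k)) \<le> norm u * norm a"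
proof -
  have "cmod (\<Sum>k\<in>UNIV. u$k * cnj (a$k)) \<le> (\<Sum>k\<in>UNIV. cmod (u$k * cnj (a$k)))"
    by (rule norm_sum)
  also have "\<dots> = (\<Sum>k\<in>UNIV. \<bar>cmod (u$k)\<bar> * \<bar>cmod (a$k)\<bar>)"
    by (simp add: norm_mult)
  also have "\<dots> \<le> L2_set (\<lambda>k. cmod (u$k)) UNIV * L2_set (\<lambda>k. cmod (a$k)) UNIV"
    by (rule L2_set_mult_ineq)
  also have "\<dots> = norm u * norm a" by (simp add: norm_vec_def)
  finally show ?thesis .
qed

lemma W_nz:
  fixes u a :: "complex^'n::finite"
  assumes "norm u < 1" "norm a < 1"
  shows "Wf a u \<noteq> 0"
proof
  assume "Wf a u = 0"
  then have "(\<Sum>k\<in>UNIV. u$k * cnj (a$k)) = 1" unfolding Wf_def by simp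
  then have "1 \<le> norm u * norm a" using cs_bound[of u a] by simp
  moreover have "norm u * norm a < 1"
    using assms by (metis mult_le_one norm_ge_zero less_le_not_le mult_strict_mono' zero_le_one mult_1_left le_less)
  ultimately show False by simp
qed

lemma Rf_nz: "norm u < 1 \<Longrightarrow> Rf u \<noteq> 0"
proof -
  assume a: "norm u < 1"
  then have "(norm u)^2 < 1" by (simp add: power_less_one_iff abs_less_iff)
  then have "1 - (norm u)^2 \<noteq> 0" by simp
  then show ?thesis by (simp only: Rf_norm of_real_eq_0_iff) simp
qed

lemma Wf_swap: "Wf x z = Wbf z x" unfolding Wf_def Wbf_def ..
lemma Wbf_swap: "Wbf x z = Wf z x" unfolding Wf_def Wbf_def ..

lemma mono_sym_pow: "mnm a e p p u = Rf u ^ e * (inverse (Wf a u) * inverse (Wbf a u)) ^ p"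
  unfolding mnm_def by (simp add: power_mult_distrib)

lemma K_eq:
  fixes z :: "complex^'n::finite"
  shows "(\<lambda>w. complex_of_real ((1 - (norm w)^2) / (cmod (1 - cinner z w))^2)) = mnm z 1 1 1"
proof
  fix w :: "complex^'n"
  have c: "1 - cinner z w = Wbf z w" unfolding cinner_def Wbf_def ..
  have "complex_of_real ((cmod (Wbf z w))^2) = Wbf z w * cnj (Wbf z w)"
    by (rule complex_norm_square)
  also have "cnj (Wbf z w) = Wf z w" by (simp add: Wbf_cnj)
  finally have "complex_of_real ((cmod (Wbf z w))^2) = Wbf z w * Wf z w" .
  then show "complex_of_real ((1 - (norm w)^2) / (cmod (1 - cinner z w))^2) = mnm z 1 1 1 w"
    unfolding c mnm_def Rf_norm by (simp add: field_simps)
qed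

lemma G_eq:
  fixes xi :: "complex^'n::finite"
  shows "(\<lambda>u. complex_of_real ((1 - (norm u)^2) ^ (m + 1) / (cmod (1 - cinner u xi)) ^ (2 * (m + 1))))
     = mnm xi (m + 1) (m + 1) (m + 1)"
proof
  fix u :: "complex^'n"
  have c: "1 - cinner u xi = Wf xi u" unfolding cinner_def Wf_def ..
  have "complex_of_real ((cmod (Wf xi u)) ^ (2 * (m + 1))) = complex_of_real (((cmod (Wf xi u))^2) ^ (m + 1))"
    by (simp only: power_mult)
  also have "\<dots> = (complex_of_real ((cmod (Wf xi u))^2)) ^ (m + 1)"
    by (rule of_real_power)
  also have "complex_of_real ((cmod (Wf xi u))^2) = Wf xi u * Wbf xi u"
    by (simp only: complex_norm_square Wbf_cnj)
  finally have "complex_of_real ((cmod (Wf xi u)) ^ (2 * (m + 1))) = (Wf xi u * Wbf xi u) ^ (m + 1)" .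
  then have "complex_of_real ((1 - (norm u)^2) ^ (m + 1) / (cmod (1 - cinner u xi)) ^ (2 * (m + 1)))
     = Rf u ^ (m + 1) / (Wf xi u * Wbf xi u) ^ (m + 1)"
    unfolding c of_real_divide of_real_power Rf_norm by simp
  also have "\<dots> = mnm xi (m + 1) (m + 1) (m + 1) u"
    unfolding mnm_def by (simp add: divide_inverse power_mult_distrib power_inverse mult.assoc)
  finally show "complex_of_real ((1 - (norm u)^2) ^ (m + 1) / (cmod (1 - cinner u xi)) ^ (2 * (m + 1)))
     = mnm xi (m + 1) (m + 1) (m + 1) u" .
qed

lemma part1:
  fixes z xi :: "complex^'n::finite"
  assumes z: "norm z < 1" and xi: "norm xi < 1"
  shows "of_real (1 / (1 - (norm xi)^2) ^ (m + 1)) *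
              pm_op m (\<lambda>w. of_real ((1 - (norm w)^2) / (cmod (1 - cinner z w))^2)) xi
          = absE2 0 (\<lambda>u. of_real ((1 - (norm u)^2) ^ (m + 1) / (cmod (1 - cinner u xi)) ^ (2 * (m + 1)))) z
            - lap (\<lambda>u. of_real ((1 - (norm u)^2) ^ (m + 1) / (cmod (1 - cinner u xi)) ^ (2 * (m + 1)))) z"
proof -
  let ?S = "{x. Wf z x \<noteq> 0}"
  have W1: "Wf z xi \<noteq> 0" using W_nz[OF xi z] .
  have W2: "Wf xi z \<noteq> 0" using W_nz[OF z xi] .
  have xS: "xi \<in> ?S" using W1 by simp
  have C: "C2 ?S (Qprod j (mnm z 1 1 1))" for j
    by (rule C2_cong[OF open_W _ C2_QK[of z j]]) (rule Qprod_K[symmetric])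
  have R: "Rf xi \<noteq> 0" using Rf_nz[OF xi] .
  have fm: "(of_nat (fact m) :: complex) \<noteq> 0" by simp
  have "of_real (1 / (1 - (norm xi)^2) ^ (m + 1)) * pm_op m (mnm z 1 1 1) xi
      = (1 / Rf xi ^ (m + 1)) * (Rf xi ^ Suc m * QK z m xi / (of_nat (fact m))^2)"
    unfolding pm_op_def pprod_eq[OF open_W C xS] Qprod_K[OF xS]
    by (simp add: Rf_norm)
  also have "\<dots> = QK z m xi / (of_nat (fact m))^2"
    using R by (simp add: field_simps)
  also have "\<dots> = of_nat (Suc m) * of_nat (Suc m) * Rf xi * mnm xi (Suc m) (Suc (Suc m)) (Suc (Suc m)) z
      - of_nat (Suc m) * (2 * of_nat 0 + of_nat (Suc m) - of_nat CARD('n)) * mnm xi (Suc m - 1) (Suc m) (Suc m) z"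
  proof -
    define P where "P = inverse (Wf z xi) * inverse (Wbf z xi)"
    have P2: "inverse (Wf xi z) * inverse (Wbf xi z) = P"
      unfolding P_def Wf_swap[of xi z] Wbf_swap[of xi z] by simp
    have "QK z m xi = of_nat (fact m) ^ 2 * (Rf z ^ m * of_nat (Suc m) * (of_nat CARD('n) - 1 - of_nat m) * P ^ Suc m
        + of_nat (Suc m) ^ 2 * Rf z ^ Suc m * Rf xi * P ^ Suc (Suc m))"
      unfolding QK_def c1_def c2_def mono_sym_pow P_def
      by (simp add: algebra_simps power2_eq_square)
    then have "QK z m xi / (of_nat (fact m))^2 = Rf z ^ m * of_nat (Suc m) * (of_nat CARD('n) - 1 - of_nat m) * P ^ Suc m
        + of_nat (Suc m) ^ 2 * Rf z ^ Suc m * Rf xi * P ^ Suc (Suc m)"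
      using fm by simp
    then show ?thesis unfolding mono_sym_pow P2 by (simp add: algebra_simps power2_eq_square)
  qed
  also have "\<dots> = Qop 0 (mnm xi (Suc m) (Suc m) (Suc m)) z"
    by (rule Qop_mono_sym[OF W2, symmetric]) simp
  finally show ?thesis
    unfolding K_eq G_eq Qop_def by simp
qed



lemma diffon_at: "open S \<Longrightarrow> f differentiable_on S \<Longrightarrow> x \<in> S \<Longrightarrow> f differentiable (at x)"
  using differentiable_on_eq_differentiable_at by blast

lemma Ck_cong:
  fixes f g :: "'n::finite cfun"
  assumes S: "open S"
  shows "(\<And>x. x \<in> S \<Longrightarrow> f x = g x) \<Longrightarrow> Ck_on k S f \<Longrightarrow> Ck_on k S g"
proof (induction k arbitrary: f g)
  case 0
  then show ?case using continuous_on_cong by (metis Ck_on.simps(1))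
next
  case (Suc k)
  have d: "f differentiable_on S" "continuous_on S f" "\<And>v. Ck_on k S (\<lambda>z. frechet_derivative f (at z) v)"
    using Suc.prems(2) by auto
  have "g differentiable_on S"
    by (rule differentiable_at_imp_differentiable_on)
       (rule diff_cong[OF S _ Suc.prems(1) diffon_at[OF S d(1)]])
  moreover have "continuous_on S g" using d(2) Suc.prems(1) continuous_on_cong by metis
  moreover have "Ck_on k S (\<lambda>z. frechet_derivative g (at z) v)" for v
    by (rule Suc.IH[OF _ d(3)]) (simp add: fd_cong[OF S _ Suc.prems(1)])
  ultimately show ?case by simp
qed

lemma Ck_mono: "Ck_on (Suc k) S f \<Longrightarrow> Ck_on k S f"
proof (induction k arbitrary: f)
  case 0
  then show ?case by simp
next
  case (Suc k)
  have "f differentiable_on S \<and> continuous_on S f \<and> (\<forall>v. Ck_on (Suc k) S (\<lambda>z. frechet_derivative f (at z) v))"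
    using Suc.prems Ck_on.simps(2)[of "Suc k" S f] by blast
  then show ?case using Suc.IH Ck_on.simps(2)[of k S f] by blast
qed

lemma Ck_const: "Ck_on k S (\<lambda>x. c)"
proof (induction k arbitrary: c)
  case (Suc k)
  then show ?case by (simp add: differentiable_on_const)
qed simp

lemma Ck_add:
  fixes f g :: "'n::finite cfun"
  assumes S: "open S"
  shows "Ck_on k S f \<Longrightarrow> Ck_on k S g \<Longrightarrow> Ck_on k S (\<lambda>x. f x + g x)"
proof (induction k arbitrary: f g)
  case 0
  then show ?case by (simp add: continuous_on_add)
next
  case (Suc k)
  have f: "f differentiable_on S" "continuous_on S f" "\<And>v. Ck_on k S (\<lambda>z. frechet_derivative f (at z) v)"
    using Suc.prems(1) by auto
  have g: "g differentiable_on S" "continuous_on S g" "\<And>v. Ck_on k S (\<lambda>z. frechet_derivative g (at z) v)"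
    using Suc.prems(2) by auto
  have "Ck_on k S (\<lambda>z. frechet_derivative (\<lambda>x. f x + g x) (at z) v)" for v
  proof (rule Ck_cong[OF S _ Suc.IH[OF f(3) g(3)]])
    fix x assume "x \<in> S"
    then show "frechet_derivative f (at x) v + frechet_derivative g (at x) v =
       frechet_derivative (\<lambda>x. f x + g x) (at x) v"
      using Dv_add[OF diffon_at[OF S f(1)] diffon_at[OF S g(1)]] by (simp add: Dv_def)
  qed
  then show ?case using f g by (simp add: continuous_on_add)
qed

lemma Ck_mult:
  fixes f g :: "'n::finite cfun"
  assumes S: "open S"
  shows "Ck_on k S f \<Longrightarrow> Ck_on k S g \<Longrightarrow> Ck_on k S (\<lambda>x. f x * g x)"
proof (induction k arbitrary: f g)
  case 0
  then show ?case by (simp add: continuous_on_mult)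
next
  case (Suc k)
  have f: "f differentiable_on S" "continuous_on S f" "\<And>v. Ck_on k S (\<lambda>z. frechet_derivative f (at z) v)"
    using Suc.prems(1) by auto
  have g: "g differentiable_on S" "continuous_on S g" "\<And>v. Ck_on k S (\<lambda>z. frechet_derivative g (at z) v)"
    using Suc.prems(2) by auto
  have fk: "Ck_on k S f" using Suc.prems(1) by (rule Ck_mono)
  have gk: "Ck_on k S g" using Suc.prems(2) by (rule Ck_mono)
  have "Ck_on k S (\<lambda>z. frechet_derivative (\<lambda>x. f x * g x) (at z) v)" for v
  proof (rule Ck_cong[OF S _ Ck_add[OF S Suc.IH[OF fk g(3)] Suc.IH[OF f(3) gk]]])
    fix x assume "x \<in> S"
    then show "f x * frechet_derivative g (at x) v + frechet_derivative f (at x) v * g x =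
       frechet_derivative (\<lambda>x. f x * g x) (at x) v"
      using Dv_mult[OF diffon_at[OF S f(1)] diffon_at[OF S g(1)]] by (simp add: Dv_def)
  qed
  then show ?case using f g by (simp add: continuous_on_mult differentiable_on_mult)
qed

lemma Ck_bl: "bounded_linear L \<Longrightarrow> Ck_on k S (L :: 'n::finite cfun)"
proof (cases k)
  case 0
  assume "bounded_linear L"
  then show ?thesis using 0 by (simp add: linear_continuous_on)
next
  case (Suc k')
  assume L: "bounded_linear L"
  have fd: "frechet_derivative L (at z) = L" for z
    using frechet_derivative_at[OF bounded_linear_imp_has_derivative[OF L]] by simp
  have "L differentiable_on S"
    using L by (simp add: bounded_linear_imp_differentiable_on)
  then show ?thesis using Suc L by (simp add: fd Ck_const linear_continuous_on)
qed

lemma Ck_sum: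
  fixes f :: "'i \<Rightarrow> 'n::finite cfun"
  assumes S: "open S"
  shows "finite I \<Longrightarrow> (\<And>i. i \<in> I \<Longrightarrow> Ck_on k S (f i)) \<Longrightarrow> Ck_on k S (\<lambda>x. \<Sum>i\<in>I. f i x)"
proof (induction I rule: finite_induct)
  case empty
  then show ?case by (simp add: Ck_const)
next
  case (insert i I)
  then show ?case by (simp add: Ck_add[OF S])
qed

lemma sm_Ck: "smooth_on S f \<Longrightarrow> Ck_on k S f"
  unfolding smooth_on_def by blast

lemma sm_add: "open S \<Longrightarrow> smooth_on S f \<Longrightarrow> smooth_on S g \<Longrightarrow> smooth_on S (\<lambda>x. f x + g x)"
  unfolding smooth_on_def by (blast intro: Ck_add)
lemma sm_mult: "open S \<Longrightarrow> smooth_on S f \<Longrightarrow> smooth_on S g \<Longrightarrow> smooth_on S (\<lambda>x. f x * g x)"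
  unfolding smooth_on_def by (blast intro: Ck_mult)
lemma sm_const: "smooth_on S (\<lambda>x. c)"
  unfolding smooth_on_def by (blast intro: Ck_const)
lemma sm_bl: "bounded_linear L \<Longrightarrow> smooth_on S L"
  unfolding smooth_on_def by (blast intro: Ck_bl)
lemma sm_sum: "open S \<Longrightarrow> finite I \<Longrightarrow> (\<And>i. i \<in> I \<Longrightarrow> smooth_on S (f i)) \<Longrightarrow>
   smooth_on S (\<lambda>x. \<Sum>i\<in>I. f i x)"
  unfolding smooth_on_def by (blast intro: Ck_sum)
lemma sm_deriv: "smooth_on S f \<Longrightarrow> smooth_on S (\<lambda>z. frechet_derivative f (at z) v)"
  unfolding smooth_on_def using Ck_on.simps(2) by blast

lemma sm_coord: "smooth_on S (\<lambda>x::complex^'n::finite. x$j)"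
  by (rule sm_bl) (rule bounded_linear_vec_nth)
lemma sm_cnjcoord: "smooth_on S (\<lambda>x::complex^'n::finite. cnj (x$j))"
  by (rule sm_bl) (rule bounded_linear_compose[OF bounded_linear_cnj bounded_linear_vec_nth])

lemma dz_fun: "dz j f = (\<lambda>z. 1/2 * frechet_derivative f (at z) (axis j 1) + (-\<i>/2) * frechet_derivative f (at z) (axis j \<i>))"
  by (rule ext) (simp add: dz_lin lin_def Dv_def)
lemma dzb_fun: "dzb j f = (\<lambda>z. 1/2 * frechet_derivative f (at z) (axis j 1) + (\<i>/2) * frechet_derivative f (at z) (axis j \<i>))"
  by (rule ext) (simp add: dzb_lin lin_def Dv_def)

lemma sm_dz: "open S \<Longrightarrow> smooth_on S f \<Longrightarrow> smooth_on S (dz j f)"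
  unfolding dz_fun by (intro sm_add sm_mult sm_const sm_deriv)
lemma sm_dzb: "open S \<Longrightarrow> smooth_on S f \<Longrightarrow> smooth_on S (dzb j f)"
  unfolding dzb_fun by (intro sm_add sm_mult sm_const sm_deriv)

lemma sm_Eop: "open S \<Longrightarrow> smooth_on S f \<Longrightarrow> smooth_on S (Eop s f)"
  unfolding Eop_fun by (intro sm_add sm_mult sm_const sm_sum sm_coord sm_dz) auto
lemma sm_Ebop: "open S \<Longrightarrow> smooth_on S f \<Longrightarrow> smooth_on S (Ebop s f)"
  unfolding Ebop_fun by (intro sm_add sm_mult sm_const sm_sum sm_cnjcoord sm_dzb) auto

lemma sm_Qop: "open S \<Longrightarrow> smooth_on S f \<Longrightarrow> smooth_on S (Qop k f)"
proof -
  assume S: "open S" and f: "smooth_on S f"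
  have 1: "Qop k f = (\<lambda>z. absE2 (real k) f z + (-1) * lap f z)"
    by (rule ext) (simp add: Qop_def)
  have 2: "absE2 (real k) f = Eop (real k) (Ebop (real k) f)"
    by (rule ext) (simp add: absE2_def)
  have 3: "lap f = (\<lambda>z. \<Sum>j\<in>UNIV. dz j (dzb j f) z)"
    by (rule ext) (simp add: lap_def)
  show ?thesis unfolding 1 2 3
    using S f by (intro sm_add sm_mult sm_const sm_sum sm_Eop sm_Ebop sm_dz sm_dzb) auto
qed

lemma sm_Qprod: "open S \<Longrightarrow> smooth_on S f \<Longrightarrow> smooth_on S (Qprod j f)"
  by (induction j) (simp_all add: sm_Qop)

lemma sm_C2: "open S \<Longrightarrow> smooth_on S f \<Longrightarrow> C2 S f"
proof -
  assume S: "open S" and f: "smooth_on S f"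
  have d: "smooth_on S g \<Longrightarrow> u \<in> S \<Longrightarrow> g differentiable (at u)" for g u
    using sm_Ck[of S g 1] S by (auto intro: diffon_at)
  show ?thesis unfolding C2_def using d f sm_dz[OF S f] sm_dzb[OF S f] by blast
qed


theorem lemma2p2:
  fixes m :: nat
  assumes "m \<ge> 1"
  shows "(\<forall>z \<in> ball (0::complex^'n::finite) 1. \<forall>\<xi> \<in> ball 0 1.
            of_real (1 / (1 - (norm \<xi>)^2) ^ (m + 1)) *
              pm_op m (\<lambda>w. of_real ((1 - (norm w)^2) / (cmod (1 - cinner z w))^2)) \<xi>
          = absE2 0 (\<lambda>u. of_real ((1 - (norm u)^2) ^ (m + 1) / (cmod (1 - cinner u \<xi>)) ^ (2 * (m + 1)))) z
            - lap (\<lambda>u. of_real ((1 - (norm u)^2) ^ (m + 1) / (cmod (1 - cinner u \<xi>)) ^ (2 * (m + 1)))) z)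
       \<and> (\<forall>f :: 'n cfun. smooth_on (ball 0 1) f \<longrightarrow> (\<forall>\<xi> \<in> ball 0 1.
            (of_nat (fact m))^2 * of_real (1 / (1 - (norm \<xi>)^2) ^ (m + 1)) * pm_op m f \<xi>
          = Qprod m f \<xi>))"
proof (intro conjI ballI allI impI)
  fix z \<xi> :: "complex^'n"
  assume "z \<in> ball 0 1" "\<xi> \<in> ball 0 1"
  then have "norm z < 1" "norm \<xi> < 1" by auto
  then show "of_real (1 / (1 - (norm \<xi>)^2) ^ (m + 1)) *
              pm_op m (\<lambda>w. of_real ((1 - (norm w)^2) / (cmod (1 - cinner z w))^2)) \<xi>
          = absE2 0 (\<lambda>u. of_real ((1 - (norm u)^2) ^ (m + 1) / (cmod (1 - cinner u \<xi>)) ^ (2 * (m + 1)))) z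
            - lap (\<lambda>u. of_real ((1 - (norm u)^2) ^ (m + 1) / (cmod (1 - cinner u \<xi>)) ^ (2 * (m + 1)))) z"
    by (rule part1)
next
  fix f :: "'n cfun" and \<xi> :: "complex^'n"
  assume f: "smooth_on (ball 0 1) f" and x: "\<xi> \<in> ball 0 1"
  have S: "open (ball (0::complex^'n) 1)" by simp
  have C: "C2 (ball 0 1) (Qprod j f)" for j by (rule sm_C2[OF S sm_Qprod[OF S f]])
  have R: "Rf \<xi> \<noteq> 0" using x by (intro Rf_nz) auto
  have fm: "(of_nat (fact m) :: complex) \<noteq> 0" by simp
  show "(of_nat (fact m))^2 * of_real (1 / (1 - (norm \<xi>)^2) ^ (m + 1)) * pm_op m f \<xi> = Qprod m f \<xi>"
    unfolding pm_op_def pprod_eq[OF S C x]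
    using R fm by (simp add: Rf_norm field_simps)
qed

end
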